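(* There exists a finite planar graph $G$ such that the vertices of $G$ cannot be non-repetitively coloured using fewer than seven colours; that is, every non-repetitive vertex colouring of $G$ uses at least seven colours.
   Context: A finite sequence $a_1a_2\cdots a_n$ is called non-repetitive if it contains no two identical adjacent blocks, i.e. there are no $i$ and $m\ge 1$ with $i+2m-1\le n$ and $a_{i+j}=a_{i+m+j}$ for all $0\le j<m$. A vertex colouring of a graph $G$ is called non-repetitive if for every path $v_1v_2\cdots v_n$ in $G$ with distinct vertices, the sequence of colours of $v_1,\dots,v_n$ is non-repetitive. *)

theory Defs
  imports "HOL-Analysis.Analysis"
begin

definition finite_simple_graph :: "'a set \<Rightarrow> 'a set set \<Rightarrow> bool" where
  "finite_simple_graph V E \<longleftrightarrow> finite V \<and> (\<forall>e\<in>E. e \<subseteq> V \<and> card e = 2)"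

definition planar :: "'a set \<Rightarrow> 'a set set \<Rightarrow> bool" where
  "planar V E \<longleftrightarrow>
     (\<exists>(p :: 'a \<Rightarrow> real^2) (\<gamma> :: 'a set \<Rightarrow> real \<Rightarrow> real^2).
        inj_on p V \<and>
        (\<forall>e\<in>E. arc (\<gamma> e) \<and> {pathstart (\<gamma> e), pathfinish (\<gamma> e)} = p ` e \<and>
                 (\<forall>v\<in>V. p v \<in> path_image (\<gamma> e) \<longrightarrow> v \<in> e)) \<and>
        (\<forall>e\<in>E. \<forall>f\<in>E. e \<noteq> f \<longrightarrow> path_image (\<gamma> e) \<inter> path_image (\<gamma> f) \<subseteq> p ` (e \<inter> f)))"

definition nonrepetitive_seq :: "'c list \<Rightarrow> bool" where
  "nonrepetitive_seq xs \<longleftrightarrow>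
     \<not> (\<exists>i m. m \<ge> 1 \<and> i + 2 * m \<le> length xs \<and>
              (\<forall>j<m. xs ! (i + j) = xs ! (i + m + j)))"

definition graph_path :: "'a set \<Rightarrow> 'a set set \<Rightarrow> 'a list \<Rightarrow> bool" where
  "graph_path V E vs \<longleftrightarrow> vs \<noteq> [] \<and> set vs \<subseteq> V \<and> distinct vs \<and>
     (\<forall>i. Suc i < length vs \<longrightarrow> {vs ! i, vs ! Suc i} \<in> E)"

definition nonrepetitive_colouring :: "'a set \<Rightarrow> 'a set set \<Rightarrow> ('a \<Rightarrow> 'c) \<Rightarrow> bool" where
  "nonrepetitive_colouring V E c \<longleftrightarrow>
     (\<forall>vs. graph_path V E vs \<longrightarrow> nonrepetitive_seq (map c vs))"

end

theory Submission
  imports Defs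
begin

definition pts :: "(int \<times> int) list" where "pts = [(0, 1000), (0, -1000), (40, 0), (49, 1), (44, 2), (45, 4), (45, 6), (44, 8), (80, 0), (89, 1), (84, 2), (85, 4), (85, 6), (84, 8), (120, 0), (129, 1), (124, 2), (125, 4), (125, 6), (124, 8), (160, 0), (169, 1), (164, 2), (165, 4), (165, 6), (164, 8), (200, 0), (209, 1), (204, 2), (205, 4), (205, 6), (204, 8)]"
definition gad :: "nat \<Rightarrow> (nat \<times> nat) list" where
 "gad i = (let n = 2 + 6*i in [(0,n),(1,n),(n,n+1),(n,n+2),(n,n+3),(n,n+4),(n,n+5),(n+1,n+2),(n+1,n+3),(n+1,n+4),(n+1,n+5),(n+2,n+3),(n+3,n+4),(n+4,n+5)])"
definition el :: "(nat \<times> nat) list" where "el = (0,1) # concat (map gad [0..<5])"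
definition pt :: "nat \<Rightarrow> int \<times> int" where "pt v = pts ! v"
definition orient :: "nat \<Rightarrow> nat \<Rightarrow> nat \<Rightarrow> int" where
 "orient a b c = (fst (pt b) - fst (pt a)) * (snd (pt c) - snd (pt a)) - (snd (pt b) - snd (pt a)) * (fst (pt c) - fst (pt a))"
definition ss where "ss a b c d = ((orient a b c > 0 \<and> orient a b d > 0) \<or> (orient a b c < 0 \<and> orient a b d < 0))"
definition ok :: "nat \<times> nat \<Rightarrow> nat \<times> nat \<Rightarrow> bool" where
 "ok e f = (case e of (a,b) \<Rightarrow> case f of (c,d) \<Rightarrow>
   (if e = f then True else if a = c then orient a b d \<noteq> 0 else if a = d then orient a b c \<noteq> 0
    else if b = c then orient a b d \<noteq> 0 else if b = d then orient a b c \<noteq> 0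
    else ss a b c d \<or> ss c d a b))"
lemma chk1: "list_all (\<lambda>e. list_all (ok e) el) el"
  by code_simp
lemma chk2: "list_all (\<lambda>e. list_all (\<lambda>v. v = fst e \<or> v = snd e \<or> orient (fst e) (snd e) v \<noteq> 0) [0..<32]) el"
  by code_simp
lemma chk3: "distinct (map pt [0..<32])" by code_simp
lemma chk4: "list_all (\<lambda>(a,b). a < b \<and> b < 32) el" by code_simp
definition orR :: "real^2 \<Rightarrow> real^2 \<Rightarrow> real^2 \<Rightarrow> real" where
 "orR a b c = (b$1 - a$1)*(c$2 - a$2) - (b$2 - a$2)*(c$1 - a$1)"
lemma orR_aff: "orR a b ((1-(t::real)) *\<^sub>R c + t *\<^sub>R d) = (1-t)* orR a b c + t* orR a b d"
  unfolding orR_def by (simp add: algebra_simps)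
lemma orR_self: "orR a b a = 0" "orR a b b = 0" unfolding orR_def by (simp_all add: algebra_simps)
lemma orR_perm: "orR b c a = orR a b c" "orR b a c = - orR a b c"
  unfolding orR_def by (simp_all add: algebra_simps)
lemma seg_on: "x \<in> closed_segment a b \<Longrightarrow> orR a b x = 0"
  unfolding closed_segment_def by (auto simp: orR_aff orR_self)
lemma seg_pos: assumes "x \<in> closed_segment c d" "orR a b c > 0" "orR a b d > 0" shows "orR a b x > 0"
proof -
  obtain u where u: "0 \<le> u" "u \<le> 1" "x = (1-u) *\<^sub>R c + u *\<^sub>R d" using assms(1) unfolding closed_segment_def by auto
  have "orR a b x = (1-u)* orR a b c + u* orR a b d" using u by (simp add: orR_aff)
  moreover have "(1-u)* orR a b c + u* orR a b d > 0"
  proof (cases "u = 0")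
    case True then show ?thesis using assms by simp
  next
    case False then have "u > 0" using u by simp
    then have "u* orR a b d > 0" using assms by simp
    moreover have "(1-u)* orR a b c \<ge> 0" using u assms by simp
    ultimately show ?thesis by simp
  qed
  ultimately show ?thesis by simp
qed
lemma seg_neg: assumes "x \<in> closed_segment c d" "orR a b c < 0" "orR a b d < 0" shows "orR a b x < 0"
proof -
  have e: "orR b a y = - orR a b y" for y by (rule orR_perm(2))
  have "orR b a c > 0" "orR b a d > 0" using assms e[of c] e[of d] by linarith+
  then have "orR b a x > 0" using seg_pos assms(1) by blast
  then show ?thesis using e[of x] by linarith
qed
lemma seg_sep: assumes "(orR a b c > 0 \<and> orR a b d > 0) \<or> (orR a b c < 0 \<and> orR a b d < 0)"
  shows "closed_segment a b \<inter> closed_segment c d = {}"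
proof (rule ccontr)
  assume "closed_segment a b \<inter> closed_segment c d \<noteq> {}"
  then obtain x where x1: "x \<in> closed_segment a b" and x2: "x \<in> closed_segment c d" by blast
  have "orR a b x = 0" using seg_on[OF x1] .
  moreover have "orR a b x > 0 \<or> orR a b x < 0"
    using assms seg_pos[OF x2] seg_neg[OF x2] by blast
  ultimately show False by simp
qed
lemma seg_common: assumes "orR a b d \<noteq> 0" shows "closed_segment a b \<inter> closed_segment a d \<subseteq> {a}"
proof
  fix x assume x: "x \<in> closed_segment a b \<inter> closed_segment a d"
  obtain t where t: "0 \<le> t" "t \<le> 1" "x = (1-t) *\<^sub>R a + t *\<^sub>R d" using x unfolding closed_segment_def by auto
  have "orR a b x = t * orR a b d" using t by (simp add: orR_aff orR_self)
  moreover have "orR a b x = 0" using x seg_on by blast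
  ultimately have "t = 0" using assms by simp
  then show "x \<in> {a}" using t by simp
qed

definition p :: "nat \<Rightarrow> real^2" where
  "p v = vector [real_of_int (fst (pt v)), real_of_int (snd (pt v))]"

lemma p_comp: "p v $ 1 = real_of_int (fst (pt v))" "p v $ 2 = real_of_int (snd (pt v))"
  by (simp_all add: p_def)

lemma orR_p: "orR (p a) (p b) (p c) = real_of_int (orient a b c)"
  by (simp add: orR_def orient_def p_comp)

lemma p_inj: assumes "pt a \<noteq> pt b" shows "p a \<noteq> p b"
proof
  assume "p a = p b"
  then have "p a $ 1 = p b $ 1" "p a $ 2 = p b $ 2" by simp_all
  then have "fst (pt a) = fst (pt b)" "snd (pt a) = snd (pt b)" by (simp_all add: p_comp)
  then show False using assms by (simp add: prod_eq_iff)
qed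

definition VV :: "nat set" where "VV = {0..<32}"
definition EE :: "nat set set" where "EE = (\<lambda>(a,b). {a,b}) ` set el"
definition gam :: "nat set \<Rightarrow> real \<Rightarrow> real^2" where
  "gam e = linepath (p (Min e)) (p (Max e))"

lemma c1: "\<forall>e\<in>set el. \<forall>f\<in>set el. ok e f" using chk1 by (simp add: list_all_iff)
lemma c2: "\<forall>e\<in>set el. \<forall>v<32. v = fst e \<or> v = snd e \<or> orient (fst e) (snd e) v \<noteq> 0"
  using chk2 by (simp add: list_all_iff)
lemma c3: "inj_on pt {0..<32}" using chk3 by (simp add: distinct_map)
lemma c4: "\<forall>(a,b)\<in>set el. a < b \<and> b < 32" using chk4 by (simp add: list_all_iff)

lemma el_lt: "(a,b) \<in> set el \<Longrightarrow> a < b \<and> b < 32" using c4 by blast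

lemma gam_el: assumes "(a,b) \<in> set el" shows "gam {a,b} = linepath (p a) (p b)"
proof -
  have "a < b" using el_lt[OF assms] by simp
  then show ?thesis unfolding gam_def by (simp add: min_def max_def)
qed

lemma seg_pair:
  assumes "ok (a,b) (c,d)" "(a,b) \<noteq> (c,d)"
  shows "closed_segment (p a) (p b) \<inter> closed_segment (p c) (p d) \<subseteq> p ` ({a,b} \<inter> {c,d})"
proof -
  have sw: "\<And>x y z. orR y x z = - orR x y z" by (rule orR_perm(2))
  show ?thesis
  proof (cases "a = c")
    case True
    then have "orient a b d \<noteq> 0" using assms unfolding ok_def by auto
    then have "orR (p a) (p b) (p d) \<noteq> 0" by (simp add: orR_p)
    then show ?thesis using seg_common True by fastforce
  next
    case ac: False
    show ?thesis
    proof (cases "a = d")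
      case True
      then have "orient a b c \<noteq> 0" using assms ac unfolding ok_def by auto
      then have "orR (p a) (p b) (p c) \<noteq> 0" by (simp add: orR_p)
      then have "closed_segment (p a) (p b) \<inter> closed_segment (p a) (p c) \<subseteq> {p a}" by (rule seg_common)
      then show ?thesis using True by (auto simp: closed_segment_commute)
    next
      case ad: False
      show ?thesis
      proof (cases "b = c")
        case True
        then have "orient a b d \<noteq> 0" using assms ac ad unfolding ok_def by auto
        then have "orR (p b) (p a) (p d) \<noteq> 0" using sw[of "p a" "p b" "p d"] by (simp add: orR_p)
        then have "closed_segment (p b) (p a) \<inter> closed_segment (p b) (p d) \<subseteq> {p b}" by (rule seg_common)
        then show ?thesis using True by (auto simp: closed_segment_commute)
      next
        case bc: False
        show ?thesis
        proof (cases "b = d")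
          case True
          then have "orient a b c \<noteq> 0" using assms ac ad bc unfolding ok_def by auto
          then have "orR (p b) (p a) (p c) \<noteq> 0" using sw[of "p a" "p b" "p c"] by (simp add: orR_p)
          then have "closed_segment (p b) (p a) \<inter> closed_segment (p b) (p c) \<subseteq> {p b}" by (rule seg_common)
          then show ?thesis using True by (auto simp: closed_segment_commute)
        next
          case bd: False
          have "ss a b c d \<or> ss c d a b" using assms ac ad bc bd unfolding ok_def by auto
          then show ?thesis
          proof
            assume "ss a b c d"
            then have "closed_segment (p a) (p b) \<inter> closed_segment (p c) (p d) = {}"
              by (intro seg_sep) (auto simp: ss_def orR_p)
            then show ?thesis by simp
          next
            assume "ss c d a b"
            then have "closed_segment (p c) (p d) \<inter> closed_segment (p a) (p b) = {}"
              by (intro seg_sep) (auto simp: ss_def orR_p)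
            then show ?thesis by auto
          qed
        qed
      qed
    qed
  qed
qed

lemma planar_VE: "planar VV EE"
  unfolding planar_def
proof (intro exI conjI ballI impI)
  show "inj_on p VV"
    using c3 p_inj unfolding VV_def inj_on_def by blast
next
  fix e assume "e \<in> EE"
  then obtain a b where ab: "(a,b) \<in> set el" "e = {a,b}" unfolding EE_def by auto
  have lt: "a < b" "b < 32" using el_lt[OF ab(1)] by auto
  have "pt a \<noteq> pt b" using inj_on_eq_iff[OF c3, of a b] lt by simp
  then have ne: "p a \<noteq> p b" by (rule p_inj)
  show "arc (gam e)" using ne ab gam_el by (simp add: arc_linepath)
  show "{pathstart (gam e), pathfinish (gam e)} = p ` e" using ab gam_el by simp
  fix v assume v: "v \<in> VV" and pv: "p v \<in> path_image (gam e)"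
  then have "p v \<in> closed_segment (p a) (p b)" using ab gam_el by simp
  then have "orient a b v = 0" using seg_on orR_p by fastforce
  then show "v \<in> e" using c2 ab v unfolding VV_def by fastforce
next
  fix e f assume e: "e \<in> EE" and f: "f \<in> EE" and nef: "e \<noteq> f"
  obtain a b where ab: "(a,b) \<in> set el" "e = {a,b}" using e unfolding EE_def by auto
  obtain c d where cd: "(c,d) \<in> set el" "f = {c,d}" using f unfolding EE_def by auto
  have "ok (a,b) (c,d)" using c1 ab cd by blast
  moreover have "(a,b) \<noteq> (c,d)" using nef ab cd by auto
  ultimately show "path_image (gam e) \<inter> path_image (gam f) \<subseteq> p ` (e \<inter> f)"
    using seg_pair ab cd gam_el by simp
qed

lemma EE_edge: assumes "{a,b} \<in> EE" shows "a \<noteq> b \<and> a \<in> VV \<and> b \<in> VV"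
proof -
  obtain x y where xy: "(x,y) \<in> set el" "{a,b} = {x,y}" using assms unfolding EE_def by auto
  have lt: "x < y" "y < 32" using el_lt[OF xy(1)] by auto
  have "a \<in> {x,y}" "b \<in> {x,y}" "x \<in> {a,b}" "y \<in> {a,b}" using xy(2) by blast+
  then show ?thesis using lt unfolding VV_def by auto
qed

lemma e01: "{0,1} \<in> EE" unfolding EE_def el_def by force

lemma gad_EE: assumes "i < 5" "(x,y) \<in> set (gad i)" shows "{x,y} \<in> EE"
proof -
  have "(x,y) \<in> set el" using assms unfolding el_def by auto
  then show ?thesis unfolding EE_def by force
qed

lemma fsg: "finite_simple_graph VV EE"
  unfolding finite_simple_graph_def
proof (intro conjI ballI)
  show "finite VV" by (simp add: VV_def)
  fix e assume "e \<in> EE"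
  then obtain a b where "(a,b) \<in> set el" "e = {a,b}" unfolding EE_def by auto
  then have "{a,b} \<in> EE" "e = {a,b}" using \<open>e \<in> EE\<close> by auto
  then show "e \<subseteq> VV" "card e = 2" using EE_edge by auto
qed

lemma col_edge: assumes "nonrepetitive_colouring VV EE c" "{a,b} \<in> EE" shows "c a \<noteq> c b"
proof
  assume eq: "c a = c b"
  have "graph_path VV EE [a,b]" using EE_edge[OF assms(2)] assms(2)
    unfolding graph_path_def by (auto simp: less_Suc_eq)
  then have "nonrepetitive_seq [c a, c b]" using assms(1) unfolding nonrepetitive_colouring_def by fastforce
  moreover have "\<not> nonrepetitive_seq [c a, c b]" unfolding nonrepetitive_seq_def
    apply (rule notI, erule notE)
    apply (rule exI[of _ 0], rule exI[of _ 1])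
    using eq by simp
  ultimately show False by simp
qed

lemma col_p4: assumes "nonrepetitive_colouring VV EE c" "{a,b} \<in> EE" "{b,d} \<in> EE" "{d,e} \<in> EE"
  "distinct [a,b,d,e]"
  shows "\<not> (c a = c d \<and> c b = c e)"
proof
  assume eq: "c a = c d \<and> c b = c e"
  have "graph_path VV EE [a,b,d,e]" using EE_edge assms(2-5)
    unfolding graph_path_def by (auto simp: less_Suc_eq nth_Cons')
  then have "nonrepetitive_seq [c a, c b, c d, c e]" using assms(1) unfolding nonrepetitive_colouring_def by fastforce
  moreover have "\<not> nonrepetitive_seq [c a, c b, c d, c e]" unfolding nonrepetitive_seq_def
    apply (rule notI, erule notE)
    apply (rule exI[of _ 0], rule exI[of _ 2])
    using eq by (auto simp: less_2_cases_iff)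
  ultimately show False by simp
qed

lemma seven: assumes "distinct xs" "length xs = 7" "set xs \<subseteq> S" "finite S" shows "7 \<le> card S"
  using card_mono[OF assms(4,3)] distinct_card[OF assms(1)] assms(2) by simp

lemma gedge: assumes "i < 5" "n = 2+6*i"
  shows "{0, n} \<in> EE" "{1, n} \<in> EE"
    "\<And>k. 1 \<le> k \<Longrightarrow> k \<le> 5 \<Longrightarrow> {n, n+k} \<in> EE"
    "\<And>k. 2 \<le> k \<Longrightarrow> k \<le> 5 \<Longrightarrow> {n+1, n+k} \<in> EE"
    "\<And>k. 2 \<le> k \<Longrightarrow> k \<le> 4 \<Longrightarrow> {n+k, n+(k+1)} \<in> EE"
proof -
  show "{0, n} \<in> EE" by (rule gad_EE[OF assms(1)]) (simp add: gad_def Let_def assms(2))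
  show "{1, n} \<in> EE" by (rule gad_EE[OF assms(1)]) (simp add: gad_def Let_def assms(2))
  fix k
  show "1 \<le> k \<Longrightarrow> k \<le> 5 \<Longrightarrow> {n, n+k} \<in> EE"
    by (rule gad_EE[OF assms(1)]) (auto simp add: gad_def Let_def le_Suc_eq numeral_eq_Suc assms(2))
  show "2 \<le> k \<Longrightarrow> k \<le> 5 \<Longrightarrow> {n+1, n+k} \<in> EE"
    by (rule gad_EE[OF assms(1)]) (auto simp add: gad_def Let_def le_Suc_eq numeral_eq_Suc assms(2))
  show "2 \<le> k \<Longrightarrow> k \<le> 4 \<Longrightarrow> {n+k, n+(k+1)} \<in> EE"
    by (rule gad_EE[OF assms(1)]) (auto simp add: gad_def Let_def le_Suc_eq numeral_eq_Suc assms(2))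
qed

lemma gadget:
  assumes nr: "nonrepetitive_colouring VV EE c" and ij: "i < 5" "j < 5" "i \<noteq> j"
    and eq: "c (2+6*i) = c (2+6*j)"
  shows "7 \<le> card (c ` VV)"
proof -
  define n where "n = 2+6*i"
  define m where "m = 2+6*j"
  have eq': "c n = c m" using eq n_def m_def by simp
  have avoid: "c (n+k) \<noteq> c 0 \<and> c (n+k) \<noteq> c 1 \<and> c (n+k) \<noteq> c n" if k: "1 \<le> k" "k \<le> 5" for k
  proof (intro conjI)
    have e1: "{n, n+k} \<in> EE" using gedge(3)[OF ij(1) n_def k] .
    then have e1': "{n+k, n} \<in> EE" by (simp add: insert_commute)
    have e2: "{n, 0} \<in> EE" "{n,1} \<in> EE" using gedge(1,2)[OF ij(1) n_def] by (simp_all add: insert_commute)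
    have e3: "{0, m} \<in> EE" "{1,m} \<in> EE" using gedge(1,2)[OF ij(2) m_def] by simp_all
    have d: "distinct [n+k, n, 0, m]" "distinct [n+k, n, 1, m]" using k ij n_def m_def by auto
    show "c (n+k) \<noteq> c 0" using col_p4[OF nr e1' e2(1) e3(1) d(1)] eq' by auto
    show "c (n+k) \<noteq> c 1" using col_p4[OF nr e1' e2(2) e3(2) d(2)] eq' by auto
    show "c (n+k) \<noteq> c n" using col_edge[OF nr e1] by auto
  qed
  have a1: "c (n+1) \<noteq> c 0 \<and> c (n+1) \<noteq> c 1 \<and> c (n+1) \<noteq> c n" using avoid[of 1] by simp
  have a2: "c (n+2) \<noteq> c 0 \<and> c (n+2) \<noteq> c 1 \<and> c (n+2) \<noteq> c n" using avoid[of 2] by simp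
  have a3: "c (n+3) \<noteq> c 0 \<and> c (n+3) \<noteq> c 1 \<and> c (n+3) \<noteq> c n" using avoid[of 3] by simp
  have a4: "c (n+4) \<noteq> c 0 \<and> c (n+4) \<noteq> c 1 \<and> c (n+4) \<noteq> c n" using avoid[of 4] by simp
  have a5: "c (n+5) \<noteq> c 0 \<and> c (n+5) \<noteq> c 1 \<and> c (n+5) \<noteq> c n" using avoid[of 5] by simp
  have yq: "c (n+1) \<noteq> c (n+k)" if "2 \<le> k" "k \<le> 5" for k
    using col_edge[OF nr gedge(4)[OF ij(1) n_def that]] by simp
  have qq: "c (n+k) \<noteq> c (n+(k+1))" if "2 \<le> k" "k \<le> 4" for k
    using col_edge[OF nr gedge(5)[OF ij(1) n_def that]] by simp
  have q23: "c (n+2) \<noteq> c (n+3)" using qq[of 2] by simp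
  have q34: "c (n+3) \<noteq> c (n+4)" using qq[of 3] by simp
  have q45: "c (n+4) \<noteq> c (n+5)" using qq[of 4] by simp
  have y2: "c (n+1) \<noteq> c (n+2)" "c (n+1) \<noteq> c (n+3)" "c (n+1) \<noteq> c (n+4)" "c (n+1) \<noteq> c (n+5)"
    using yq[of 2] yq[of 3] yq[of 4] yq[of 5] by simp_all
  have e23: "{n+2, n+3} \<in> EE" "{n+3, n+4} \<in> EE" "{n+4, n+5} \<in> EE"
    using gedge(5)[OF ij(1) n_def, of 2] gedge(5)[OF ij(1) n_def, of 3] gedge(5)[OF ij(1) n_def, of 4]
    by simp_all
  have p4: "\<not> (c (n+2) = c (n+4) \<and> c (n+3) = c (n+5))"
    by (rule col_p4[OF nr e23]) simp
  have c01: "c 0 \<noteq> c 1"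
    by (rule col_edge[OF nr e01])
  have c0n: "c 0 \<noteq> c n" "c 1 \<noteq> c n"
    using col_edge[OF nr gedge(1)[OF ij(1) n_def]] col_edge[OF nr gedge(2)[OF ij(1) n_def]] by auto
  have inV: "k \<le> 5 \<Longrightarrow> c (n+k) \<in> c ` VV" for k using ij(1) n_def unfolding VV_def by auto
  have inV0: "c 0 \<in> c ` VV" "c 1 \<in> c ` VV" unfolding VV_def by auto
  have fin: "finite (c ` VV)" unfolding VV_def by simp
  show ?thesis
  proof (cases "c (n+2) = c (n+4)")
    case False
    show ?thesis
      apply (rule seven[of "[c 0, c 1, c n, c (n+1), c (n+2), c (n+3), c (n+4)]"])
      subgoal using False a1 a2 a3 a4 q23 q34 y2 c01 c0n by auto
      subgoal by simp
      subgoal using inV[of 0] inV[of 1] inV[of 2] inV[of 3] inV[of 4] inV0 by simp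
      subgoal using fin .
      done
  next
    case True
    then have ne: "c (n+3) \<noteq> c (n+5)" using p4 by simp
    show ?thesis
      apply (rule seven[of "[c 0, c 1, c n, c (n+1), c (n+3), c (n+4), c (n+5)]"])
      subgoal using ne a1 a3 a4 a5 q34 q45 y2 c01 c0n by auto
      subgoal by simp
      subgoal using inV[of 0] inV[of 1] inV[of 3] inV[of 4] inV[of 5] inV0 by simp
      subgoal using fin .
      done
  qed
qed

lemma lower:
  assumes nr: "nonrepetitive_colouring VV EE c"
  shows "7 \<le> card (c ` VV)"
proof (cases "distinct (map (\<lambda>i. c (2+6*i)) [0..<5])")
  case False
  then obtain i j where "i < 5" "j < 5" "i \<noteq> j" "c (2+6*i) = c (2+6*j)"
    by (auto simp: distinct_conv_nth)
  then show ?thesis using gadget[OF nr] by blast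
next
  case True
  have c01: "c 0 \<noteq> c 1"
    by (rule col_edge[OF nr e01])
  have a: "c 0 \<noteq> c (2+6*i) \<and> c 1 \<noteq> c (2+6*i)" if "i < 5" for i
    using col_edge[OF nr gedge(1)[OF that refl]] col_edge[OF nr gedge(2)[OF that refl]] by simp
  have n0: "c 0 \<notin> set (map (\<lambda>i. c (2+6*i)) [0..<5])"
  proof
    assume "c 0 \<in> set (map (\<lambda>i. c (2+6*i)) [0..<5])"
    then obtain i where "i < 5" "c 0 = c (2+6*i)" by auto
    then show False using a by blast
  qed
  have n1: "c 1 \<notin> set (map (\<lambda>i. c (2+6*i)) [0..<5])"
  proof
    assume "c 1 \<in> set (map (\<lambda>i. c (2+6*i)) [0..<5])"
    then obtain i where "i < 5" "c 1 = c (2+6*i)" by auto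
    then show False using a by blast
  qed
  have "distinct (c 0 # c 1 # map (\<lambda>i. c (2+6*i)) [0..<5])"
    using True c01 n0 n1 by (simp only: distinct.simps list.set) auto
  moreover have "set (c 0 # c 1 # map (\<lambda>i. c (2+6*i)) [0..<5]) \<subseteq> c ` VV"
    unfolding VV_def by auto
  ultimately show ?thesis
    by (intro seven[of "c 0 # c 1 # map (\<lambda>i. c (2+6*i)) [0..<5]"]) (auto simp: VV_def)
qed

theorem theorem3:
  shows "\<exists>(V :: nat set) (E :: nat set set).
           finite_simple_graph V E \<and> planar V E \<and>
           (\<forall>c :: nat \<Rightarrow> nat. nonrepetitive_colouring V E c \<longrightarrow> card (c ` V) \<ge> 7)"
  using fsg planar_VE lower by blast

end
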